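(* Let $D$ be a fixed integer which is not a perfect square and let $\mathcal{Q}$ denote the set of squares in $\mathbb{Q}$. For every $\varepsilon>0$ and $N\geq 1$, \[ \#\{(A,B)\in\mathbb{Z}^2:\ |A|,|B|\leq N,\ -AB\in\mathcal{Q}\}\ll_\varepsilon N^{1+\varepsilon}, \] and \[ \#\{(A,B)\in\mathbb{Z}^2:\ |A|,|B|\leq N,\ D\big((A+B-1)^2-4AB\big)\in\mathcal{Q}\}\ll_\varepsilon |D|^{\varepsilon}N^{1+\varepsilon}. \] *)

theory Defs
  imports Complex_Main
begin

definition rat_square :: "int \<Rightarrow> bool" where
  "rat_square x \<longleftrightarrow> (\<exists>q::rat. of_int x = q ^ 2)"

definition count1 :: "real \<Rightarrow> nat" where
  "count1 N = card {(A::int, B::int). \<bar>real_of_int A\<bar> \<le> N \<and> \<bar>real_of_int B\<bar> \<le> N \<and> rat_square (- A * B)}"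

definition count2 :: "int \<Rightarrow> real \<Rightarrow> nat" where
  "count2 D N = card {(A::int, B::int). \<bar>real_of_int A\<bar> \<le> N \<and> \<bar>real_of_int B\<bar> \<le> N \<and>
       rat_square (D * ((A + B - 1) ^ 2 - 4 * A * B))}"

end

theory Submission
  imports Defs "HOL-Computational_Algebra.Squarefree" "HOL-Analysis.Harmonic_Numbers"
begin

lemma rat_square_iff: "rat_square x \<longleftrightarrow> (\<exists>m::int. x = m^2)"
proof
  assume "rat_square x"
  then obtain q :: rat where q: "of_int x = q^2" unfolding rat_square_def by auto
  obtain a b where ab: "quotient_of q = (a, b)" by (cases "quotient_of q")
  have b: "b > 0" using ab quotient_of_denom_pos by blast
  have cop: "coprime a b" using ab quotient_of_coprime by blast
  have qd: "q = of_int a / of_int b" using ab quotient_of_div by blast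
  have "of_int x * (of_int b)^2 = (of_int a :: rat)^2" using q qd b by (simp add: field_simps power2_eq_square)
  hence e: "x * b^2 = a^2" by (metis of_int_eq_iff of_int_mult of_int_power)
  hence "b^2 dvd a^2" by (metis dvd_triv_right)
  hence "b dvd a" by simp
  hence "is_unit b" using cop by (metis coprime_absorb_right)
  hence "b = 1" using b by (simp add: zdvd1_eq)
  thus "\<exists>m::int. x = m^2" using e by auto
next
  assume "\<exists>m::int. x = m^2"
  then obtain m::int where "x = m^2" by auto
  thus "rat_square x" unfolding rat_square_def by (intro exI[of _ "of_int m"]) simp
qed

lemma sqf_dvd_square:
  fixes d k :: int
  assumes "squarefree d" "d dvd k^2"
  shows "d dvd k"
proof (cases "k = 0")
  case True thus ?thesis by simp
next
  case False
  have d0: "d \<noteq> 0" using assms(1) by auto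
  show ?thesis
  proof (rule multiplicity_le_imp_dvd[OF d0])
    fix p :: int assume p: "prime p"
    have m1: "multiplicity p d \<le> 1" using squarefree_factorial_semiring''[OF d0] assms(1) p by auto
    show "multiplicity p d \<le> multiplicity p k"
    proof (cases "multiplicity p d = 0")
      case True thus ?thesis by simp
    next
      case False
      hence "p dvd d" using not_dvd_imp_multiplicity_0[of p d] by auto
      hence "p dvd k^2" using assms(2) by (rule dvd_trans)
      hence "p dvd k" using p by (meson prime_dvd_power)
      hence "multiplicity p k \<noteq> 0" using prime_elem_multiplicity_eq_zero_iff[of p k] p \<open>k \<noteq> 0\<close> by auto
      hence "multiplicity p k \<ge> 1" by simp
      thus ?thesis using m1 by linarith
    qed
  qed
qed

lemma sqf_param:
  fixes D w m :: int
  assumes "D \<noteq> 0" "D * w = m^2"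
  shows "\<exists>z. w = squarefree_part D * z^2"
proof -
  define s where "s = squarefree_part D"
  define f where "f = square_part D"
  have D: "D = s * f^2" unfolding s_def f_def by (rule squarefree_decompose)
  have f0: "f \<noteq> 0" using assms(1) D by auto
  have "f^2 dvd m^2" using assms(2) D by (metis dvd_triv_left mult.assoc mult.commute)
  hence "f dvd m" by simp
  then obtain k where k: "m = f * k" by auto
  have "f^2 * (s * w) = f^2 * k^2" using assms(2) D k by (simp add: algebra_simps power_mult_distrib)
  hence sw: "s * w = k^2" using f0 by simp
  have "s dvd k" by (rule sqf_dvd_square) (simp_all add: s_def sw[symmetric])
  then obtain z where z: "k = s * z" by auto
  have s0: "s \<noteq> 0" unfolding s_def by simp
  have "s * w = s * (s * z^2)" using sw z by (simp add: power2_eq_square algebra_simps)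
  hence "w = s * z^2" using s0 by simp
  thus ?thesis unfolding s_def by auto
qed


lemma sq_le_iff: "X \<ge> 0 \<Longrightarrow> (x::real)^2 \<le> X \<longleftrightarrow> \<bar>x\<bar> \<le> sqrt X"
  by (metis real_sqrt_abs real_sqrt_le_iff)

lemma cnt_int:
  fixes lo hi :: real assumes "lo \<le> hi"
  shows "finite {u::int. lo \<le> real_of_int u \<and> real_of_int u \<le> hi}"
    "real (card {u::int. lo \<le> real_of_int u \<and> real_of_int u \<le> hi}) \<le> hi - lo + 1"
proof -
  have e: "{u::int. lo \<le> of_int u \<and> of_int u \<le> hi} = {\<lceil>lo\<rceil>..\<lfloor>hi\<rfloor>}"
    by (auto simp: ceiling_le_iff le_floor_iff)
  show "finite {u::int. lo \<le> real_of_int u \<and> real_of_int u \<le> hi}" by (simp add: e)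
  have "real (card {\<lceil>lo\<rceil>..\<lfloor>hi\<rfloor>}) = real (nat (\<lfloor>hi\<rfloor> - \<lceil>lo\<rceil> + 1))" by simp
  also have "\<dots> \<le> hi - lo + 1"
  proof (cases "\<lfloor>hi\<rfloor> - \<lceil>lo\<rceil> + 1 \<ge> 0")
    case True
    hence "real (nat (\<lfloor>hi\<rfloor> - \<lceil>lo\<rceil> + 1)) = of_int \<lfloor>hi\<rfloor> - of_int \<lceil>lo\<rceil> + 1" by simp
    thus ?thesis using of_int_floor_le[of hi] le_of_int_ceiling[of lo] by linarith
  next
    case False thus ?thesis using assms by simp
  qed
  finally show "real (card {u::int. lo \<le> real_of_int u \<and> real_of_int u \<le> hi}) \<le> hi - lo + 1"
    by (simp add: e)
qed

lemma cnt_sq: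
  fixes X :: real assumes X: "X \<ge> 0"
  shows "finite {f::int. real_of_int f ^ 2 \<le> X}" "real (card {f::int. real_of_int f ^ 2 \<le> X}) \<le> 2 * sqrt X + 1"
proof -
  have e: "{f::int. real_of_int f ^ 2 \<le> X} = {u::int. - sqrt X \<le> real_of_int u \<and> real_of_int u \<le> sqrt X}"
  proof (rule Collect_cong)
    fix f :: int
    show "(real_of_int f ^ 2 \<le> X) = (- sqrt X \<le> real_of_int f \<and> real_of_int f \<le> sqrt X)"
      using sq_le_iff[OF X, of "real_of_int f"] by linarith
  qed
  have le: "- sqrt X \<le> sqrt X" using X by simp
  show "finite {f::int. real_of_int f ^ 2 \<le> X}" unfolding e by (rule cnt_int(1)[OF le])
  show "real (card {f::int. real_of_int f ^ 2 \<le> X}) \<le> 2 * sqrt X + 1" unfolding e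
    using cnt_int(2)[OF le] by simp
qed

lemma cnt_ann:
  fixes a M :: real assumes M: "M > 0" and a: "a > 2 * M"
  shows "finite {u::int. a - M \<le> real_of_int u ^ 2 \<and> real_of_int u ^ 2 \<le> a + M}"
    "real (card {u::int. a - M \<le> real_of_int u ^ 2 \<and> real_of_int u ^ 2 \<le> a + M}) \<le> 4 * M / sqrt a + 2"
proof -
  define lo where "lo = sqrt (a - M)"
  define hi where "hi = sqrt (a + M)"
  define I where "I = {u::int. lo \<le> real_of_int u \<and> real_of_int u \<le> hi}"
  have lohi: "lo \<le> hi" unfolding lo_def hi_def using M by (intro real_sqrt_le_mono) linarith
  have S: "{u::int. a - M \<le> real_of_int u ^ 2 \<and> real_of_int u ^ 2 \<le> a + M} \<subseteq> I \<union> uminus ` I"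
  proof
    fix u :: int assume u: "u \<in> {u::int. a - M \<le> real_of_int u ^ 2 \<and> real_of_int u ^ 2 \<le> a + M}"
    have u1: "a - M \<le> real_of_int u ^ 2" and u2: "real_of_int u ^ 2 \<le> a + M" using u by auto
    have 1: "lo \<le> \<bar>real_of_int u\<bar>" unfolding lo_def
      using real_sqrt_le_mono[OF u1] by (simp only: real_sqrt_abs)
    have 2: "\<bar>real_of_int u\<bar> \<le> hi" unfolding hi_def
      using real_sqrt_le_mono[OF u2] by (simp only: real_sqrt_abs)
    show "u \<in> I \<union> uminus ` I"
    proof (cases "u \<ge> 0")
      case True thus ?thesis using 1 2 unfolding I_def by auto
    next
      case False
      hence "- u \<in> I" using 1 2 unfolding I_def by auto
      hence "- (- u) \<in> uminus ` I" by blast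
      thus ?thesis by simp
    qed
  qed
  have fI: "finite I" unfolding I_def by (rule cnt_int(1)[OF lohi])
  have cI: "real (card I) \<le> hi - lo + 1" unfolding I_def by (rule cnt_int(2)[OF lohi])
  show fin: "finite {u::int. a - M \<le> real_of_int u ^ 2 \<and> real_of_int u ^ 2 \<le> a + M}"
    using S fI finite_subset by blast
  have "card {u::int. a - M \<le> real_of_int u ^ 2 \<and> real_of_int u ^ 2 \<le> a + M} \<le> card (I \<union> uminus ` I)"
    using S fI by (intro card_mono) auto
  also have "\<dots> \<le> card I + card (uminus ` I)" by (rule card_Un_le)
  also have "\<dots> \<le> card I + card I" using card_image_le[OF fI, of uminus] by simp
  finally have c0: "real (card {u::int. a - M \<le> real_of_int u ^ 2 \<and> real_of_int u ^ 2 \<le> a + M}) \<le> real (card I + card I)"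
    by (simp only: of_nat_le_iff)
  have c: "real (card {u::int. a - M \<le> real_of_int u ^ 2 \<and> real_of_int u ^ 2 \<le> a + M}) \<le> 2 * (hi - lo + 1)"
    using c0 cI by simp
  have sa: "sqrt a > 0" using a M by simp
  have "a + M \<ge> 0" using a M by linarith
  hence h2: "hi^2 = a + M" unfolding hi_def by simp
  have "a - M \<ge> 0" using a M by linarith
  hence l2: "lo^2 = a - M" unfolding lo_def by simp
  have "(hi - lo) * (hi + lo) = hi^2 - lo^2" by (simp add: power2_eq_square algebra_simps)
  hence hl: "(hi - lo) * (hi + lo) = 2 * M" using h2 l2 by simp
  have "sqrt a \<le> hi" unfolding hi_def using M by (intro real_sqrt_le_mono) linarith
  moreover have "lo \<ge> 0" unfolding lo_def using a M by simp
  ultimately have sh: "sqrt a \<le> hi + lo" by linarith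
  have "(hi - lo) * sqrt a \<le> (hi - lo) * (hi + lo)" using lohi sh by (intro mult_left_mono) auto
  hence "(hi - lo) * sqrt a \<le> 2 * M" using hl by simp
  hence "hi - lo \<le> 2 * M / sqrt a" using sa by (simp add: field_simps)
  thus "real (card {u::int. a - M \<le> real_of_int u ^ 2 \<and> real_of_int u ^ 2 \<le> a + M}) \<le> 4 * M / sqrt a + 2"
    using c by simp
qed

lemma sum_sym:
  fixes f :: "nat \<Rightarrow> real"
  shows "(\<Sum>z\<in>{-int m..int m} - {0}. f (nat \<bar>z\<bar>)) = 2 * (\<Sum>k\<in>{1..m}. f k)"
proof -
  have e: "{-int m..int m} - {0} = int ` {1..m} \<union> (\<lambda>k. - int k) ` {1..m}"
  proof (rule set_eqI, rule iffI)
    fix z assume z: "z \<in> {-int m..int m} - {0}"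
    show "z \<in> int ` {1..m} \<union> (\<lambda>k. - int k) ` {1..m}"
    proof (cases "z > 0")
      case True thus ?thesis using z by (auto intro!: image_eqI[of _ _ "nat z"])
    next
      case False thus ?thesis using z by (auto intro!: image_eqI[of _ _ "nat (-z)"])
    qed
  qed auto
  have d: "int ` {1..m} \<inter> (\<lambda>k. - int k) ` {1..m} = {}" by auto
  have "(\<Sum>z\<in>{-int m..int m} - {0}. f (nat \<bar>z\<bar>)) =
        (\<Sum>z\<in>int ` {1..m}. f (nat \<bar>z\<bar>)) + (\<Sum>z\<in>(\<lambda>k. - int k) ` {1..m}. f (nat \<bar>z\<bar>))"
    unfolding e by (rule sum.union_disjoint) (use d in auto)
  also have "(\<Sum>z\<in>int ` {1..m}. f (nat \<bar>z\<bar>)) = (\<Sum>k\<in>{1..m}. f k)"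
    by (subst sum.reindex) (auto simp: inj_on_def)
  also have "(\<Sum>z\<in>(\<lambda>k. - int k) ` {1..m}. f (nat \<bar>z\<bar>)) = (\<Sum>k\<in>{1..m}. f k)"
    by (subst sum.reindex) (auto simp: inj_on_def)
  finally show ?thesis by simp
qed
lemma harm_le_ln: "n \<ge> 1 \<Longrightarrow> harm n \<le> 1 + ln (real n)"
  using euler_mascheroni_sequence_decreasing[of 1 n] by (simp add: harm_def)

lemma floor_bnd:
  assumes "N \<ge> 1"
  shows "\<bar>real_of_int A\<bar> \<le> N \<longleftrightarrow> \<bar>A\<bar> \<le> int (nat \<lfloor>N\<rfloor>)"
proof -
  have "\<lfloor>N\<rfloor> \<ge> 0" using assms by simp
  hence "int (nat \<lfloor>N\<rfloor>) = \<lfloor>N\<rfloor>" by simp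
  moreover have "\<bar>real_of_int A\<bar> \<le> N \<longleftrightarrow> \<bar>A\<bar> \<le> \<lfloor>N\<rfloor>" by (simp add: le_floor_iff)
  ultimately show ?thesis by simp
qed

lemma harm_sum: "(\<Sum>k\<in>{1..n}. c / real k) = c * harm n"
  by (simp add: harm_def sum_distrib_left divide_inverse)

lemma part1:
  assumes N: "N \<ge> 1"
  shows "real (count1 N) \<le> 21 * N * (1 + ln N)"
proof -
  define n where "n = nat \<lfloor>N\<rfloor>"
  have "\<lfloor>N\<rfloor> \<ge> 1" using N by (simp add: le_floor_iff)
  hence n1: "n \<ge> 1" unfolding n_def by linarith
  have nN: "real n \<le> N" unfolding n_def using N by simp
  have bnd: "\<And>A::int. \<bar>real_of_int A\<bar> \<le> N \<longleftrightarrow> \<bar>A\<bar> \<le> int n" unfolding n_def by (rule floor_bnd[OF N])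
  define S where "S = {(A::int,B::int). \<bar>real_of_int A\<bar> \<le> N \<and> \<bar>real_of_int B\<bar> \<le> N \<and> rat_square (- A * B)}"
  define F where "F d = {f::int. real_of_int f ^ 2 \<le> real n / \<bar>real_of_int d\<bar>}" for d :: int
  define R where "R = {-int n..int n} - {0}"
  define T where "T = (SIGMA d:R. F d \<times> F d)"
  define g where "g = (\<lambda>(d::int,(f::int,z::int)). (d*f^2, -d*z^2))"
  have sub: "S \<subseteq> ({0} \<times> {-int n..int n}) \<union> g ` T"
  proof
    fix p assume "p \<in> S"
    then obtain A B where p: "p = (A,B)" and A: "\<bar>A\<bar> \<le> int n" and B: "\<bar>B\<bar> \<le> int n"
      and sq: "rat_square (- A * B)" unfolding S_def using bnd by auto
    show "p \<in> ({0} \<times> {-int n..int n}) \<union> g ` T"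
    proof (cases "A = 0")
      case True thus ?thesis using p B by auto
    next
      case False
      obtain m where m: "- A * B = m^2" using sq rat_square_iff by blast
      define d where "d = squarefree_part A"
      define f where "f = square_part A"
      have Ad: "A = d * f^2" unfolding d_def f_def by (rule squarefree_decompose)
      have f0: "f \<noteq> 0" using Ad False by auto
      have d0: "d \<noteq> 0" unfolding d_def by simp
      have "A * (- B) = m^2" using m by simp
      then obtain z where z: "- B = d * z^2" using sqf_param[OF False] unfolding d_def by blast
      have f1: "f^2 \<ge> 1" using f0 by (smt (verit, ccfv_SIG) power2_less_eq_zero_iff)
      have Aa: "\<bar>A\<bar> = \<bar>d\<bar> * f^2" using Ad by (simp add: abs_mult)
      have Ba: "\<bar>B\<bar> = \<bar>d\<bar> * z^2" using z by (metis abs_minus_cancel abs_mult power2_abs power2_eq_square)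
      have "\<bar>d\<bar> \<le> \<bar>A\<bar>" using Aa f1 by (smt (verit) divisors_zero dvd_triv_left zdvd_imp_le)
      hence dR: "d \<in> R" unfolding R_def using A d0 by auto
      have dpos: "real_of_int \<bar>d\<bar> > 0" using d0 by simp
      have "\<bar>d\<bar> * f^2 \<le> int n" using Aa A by simp
      hence "\<bar>real_of_int d\<bar> * real_of_int f ^ 2 \<le> real n" by (metis of_int_abs of_int_le_iff of_int_mult of_int_of_nat_eq of_int_power)
      hence fF: "f \<in> F d" unfolding F_def using dpos by (simp add: field_simps mult.commute)
      have "\<bar>d\<bar> * z^2 \<le> int n" using Ba B by simp
      hence "\<bar>real_of_int d\<bar> * real_of_int z ^ 2 \<le> real n" by (metis of_int_abs of_int_le_iff of_int_mult of_int_of_nat_eq of_int_power)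
      hence zF: "z \<in> F d" unfolding F_def using dpos by (simp add: field_simps mult.commute)
      have "p = g (d, (f, z))" unfolding g_def p using Ad z by simp
      moreover have "(d, (f, z)) \<in> T" unfolding T_def using dR fF zF by auto
      ultimately show ?thesis by blast
    qed
  qed
  have finR: "finite R" unfolding R_def by simp
  have Rpos: "\<And>d. d \<in> R \<Longrightarrow> real n / \<bar>real_of_int d\<bar> \<ge> 1"
  proof -
    fix d assume "d \<in> R"
    hence "\<bar>d\<bar> \<le> int n" "d \<noteq> 0" unfolding R_def by auto
    hence "\<bar>real_of_int d\<bar> \<le> real n" "\<bar>real_of_int d\<bar> > 0" by (metis of_int_abs of_int_le_iff of_int_of_nat_eq, simp)
    thus "real n / \<bar>real_of_int d\<bar> \<ge> 1" by simp
  qed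
  have finF: "\<And>d. d \<in> R \<Longrightarrow> finite (F d)" unfolding F_def using Rpos
    by (intro cnt_sq(1)) (meson order_trans zero_le_one)
  have finT: "finite T" unfolding T_def using finR finF by auto
  have cF: "\<And>d. d \<in> R \<Longrightarrow> real (card (F d \<times> F d)) \<le> 9 * real n / \<bar>real_of_int d\<bar>"
  proof -
    fix d assume d: "d \<in> R"
    define X where "X = real n / \<bar>real_of_int d\<bar>"
    have X1: "X \<ge> 1" unfolding X_def using Rpos d by simp
    have "real (card (F d)) \<le> 2 * sqrt X + 1" unfolding F_def X_def using X1 X_def
      by (intro cnt_sq(2)) simp
    also have "\<dots> \<le> 3 * sqrt X" using X1 by simp
    finally have c: "real (card (F d)) \<le> 3 * sqrt X" .
    have "real (card (F d \<times> F d)) = real (card (F d)) * real (card (F d))" by (simp add: card_cartesian_product)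
    also have "\<dots> \<le> (3 * sqrt X) * (3 * sqrt X)" using c X1 by (intro mult_mono) auto
    also have "\<dots> = 9 * X" using X1 by (simp add: algebra_simps)
    finally show "real (card (F d \<times> F d)) \<le> 9 * real n / \<bar>real_of_int d\<bar>" unfolding X_def by simp
  qed
  have "real (card T) = (\<Sum>d\<in>R. real (card (F d \<times> F d)))"
    unfolding T_def using finR finF by (simp add: card_SigmaI)
  also have "\<dots> \<le> (\<Sum>d\<in>R. 9 * real n / \<bar>real_of_int d\<bar>)" using cF by (rule sum_mono)
  also have "\<dots> = (\<Sum>d\<in>R. (\<lambda>k. 9 * real n / real k) (nat \<bar>d\<bar>))"
    by (intro sum.cong) auto
  also have "\<dots> = 2 * (9 * real n * harm n)" unfolding R_def using sum_sym[of "\<lambda>k. 9 * real n / real k" n] harm_sum[of "9 * real n" n] by simp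
  finally have cT: "real (card T) \<le> 18 * real n * harm n" by simp
  have "card S \<le> card (({0} \<times> {-int n..int n}) \<union> g ` T)"
    using sub finT by (intro card_mono) auto
  also have "\<dots> \<le> card ({0::int} \<times> {-int n..int n}) + card (g ` T)" by (rule card_Un_le)
  also have "\<dots> \<le> (2 * n + 1) + card T" using card_image_le[OF finT, of g]
    by (simp add: card_cartesian_product)
  finally have cS0: "card S \<le> (2 * n + 1) + card T" .
  have cS: "real (card S) \<le> real (2 * n + 1) + real (card T)" using cS0 by (metis of_nat_add of_nat_le_iff)
  have h: "harm n \<le> 1 + ln (real n)" using harm_le_ln n1 by simp
  have lnn: "ln (real n) \<le> ln N" using n1 nN by simp
  have "real (card S) \<le> 3 * real n + 18 * real n * (1 + ln (real n))"
  proof -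
    have "18 * real n * harm n \<le> 18 * real n * (1 + ln (real n))" using h by (intro mult_left_mono) auto
    moreover have "real (2 * n + 1) \<le> 3 * real n" using n1 by simp
    ultimately show ?thesis using cS cT by linarith
  qed
  also have "\<dots> \<le> 3 * N + 18 * N * (1 + ln N)"
    using nN lnn n1 by (intro add_mono mult_mono) auto
  also have "\<dots> \<le> 21 * N * (1 + ln N)" using N by (simp add: algebra_simps)
  finally show ?thesis unfolding count1_def S_def .
qed

lemma part2_sub:
  fixes A B D d :: int and n :: nat
  assumes A: "\<bar>A\<bar> \<le> int n" and B: "\<bar>B\<bar> \<le> int n" and D: "D \<noteq> 0"
    and sq: "rat_square (D * ((A + B - 1) ^ 2 - 4 * A * B))"
    and d: "d = squarefree_part D"
  shows "\<exists>z u. (A, B) = (let v = (u^2 + 1 - d*z^2) div 2 in ((u + v) div 2, (v - u) div 2))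
      \<and> \<bar>u\<bar> \<le> 2 * int n \<and> \<bar>u^2 - d*z^2\<bar> \<le> 4 * int n + 1 \<and> \<bar>z\<bar> \<le> 2 * int n + 1"
proof -
  obtain m where m: "D * ((A + B - 1) ^ 2 - 4 * A * B) = m^2" using sq rat_square_iff by blast
  obtain z where z: "(A + B - 1) ^ 2 - 4 * A * B = d * z^2" using sqf_param[OF D m] d by blast
  define u where "u = A - B"
  have key: "u^2 + 1 - d*z^2 = 2 * (A + B)" using z unfolding u_def by (simp add: power2_eq_square algebra_simps)
  have v: "(u^2 + 1 - d*z^2) div 2 = A + B" using key by simp
  have e: "(A, B) = (let v = (u^2 + 1 - d*z^2) div 2 in ((u + v) div 2, (v - u) div 2))"
  proof -
    have "(A, B) = ((u + (A + B)) div 2, ((A + B) - u) div 2)" unfolding u_def by simp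
    thus ?thesis unfolding v Let_def .
  qed
  have ub: "\<bar>u\<bar> \<le> 2 * int n" using A B unfolding u_def abs_le_iff by auto
  have u2: "u^2 \<le> (2 * int n)^2" using ub power2_le_iff_abs_le[of "2 * int n" u] by simp
  have w: "u^2 - d*z^2 = 2 * (A + B) - 1" using key by linarith
  have wb: "\<bar>u^2 - d*z^2\<bar> \<le> 4 * int n + 1" using A B unfolding w abs_le_iff by auto
  have "z^2 \<le> (2 * int n + 1)^2"
  proof (cases "d > 0")
    case True
    hence "z^2 \<le> d * z^2" using mult_right_mono[of 1 d "z^2"] by simp
    also have "\<dots> \<le> u^2 + 4 * int n + 1" using wb unfolding abs_le_iff by auto
    also have "\<dots> \<le> (2 * int n + 1)^2" using u2 by (simp add: power2_eq_square algebra_simps)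
    finally show ?thesis .
  next
    case False
    moreover have "d \<noteq> 0" using d by simp
    ultimately have "d < 0" by simp
    hence "z^2 \<le> - d * z^2" using mult_right_mono[of 1 "-d" "z^2"] by simp
    also have "\<dots> \<le> 4 * int n + 1" using wb zero_le_power2[of u] unfolding abs_le_iff by (elim conjE) linarith
    also have "\<dots> \<le> (2 * int n + 1)^2" by (simp add: power2_eq_square algebra_simps)
    finally show ?thesis .
  qed
  hence zb: "\<bar>z\<bar> \<le> 2 * int n + 1" using power2_le_iff_abs_le[of "2*int n+1" z] by simp
  show ?thesis by (rule exI[of _ z], rule exI[of _ u]) (intro conjI e ub wb zb)
qed

lemma sum_harm2: "(\<Sum>k\<in>{1..m}. c / real k + 2) = c * harm m + 2 * real m"
  by (simp only: sum.distrib harm_sum) simp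

lemma part2:
  assumes N: "N \<ge> 1" and D: "D \<noteq> 0"
  shows "real (count2 D N) \<le> 300 * N * (1 + ln N)"
proof -
  define n where "n = nat \<lfloor>N\<rfloor>"
  have "\<lfloor>N\<rfloor> \<ge> 1" using N by (simp add: le_floor_iff)
  hence n1: "n \<ge> 1" unfolding n_def by linarith
  have nN: "real n \<le> N" unfolding n_def using N by simp
  have bnd: "\<And>A::int. \<bar>real_of_int A\<bar> \<le> N \<longleftrightarrow> \<bar>A\<bar> \<le> int n" unfolding n_def by (rule floor_bnd[OF N])
  define d where "d = squarefree_part D"
  have d0: "d \<noteq> 0" unfolding d_def by simp
  define M :: int where "M = 4 * int n + 1"
  define Mr where "Mr = real_of_int M"
  have Mr: "Mr = 4 * real n + 1" unfolding Mr_def M_def by simp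
  have M0: "M \<ge> 0" unfolding M_def by simp
  define S where "S = {(A::int, B::int). \<bar>real_of_int A\<bar> \<le> N \<and> \<bar>real_of_int B\<bar> \<le> N \<and>
       rat_square (D * ((A + B - 1) ^ 2 - 4 * A * B))}"
  define h where "h = (\<lambda>(z::int, u::int). let v = (u^2 + 1 - d*z^2) div 2 in ((u + v) div 2, (v - u) div 2))"
  define T where "T = {(z::int, u::int). \<bar>u\<bar> \<le> 2 * int n \<and> \<bar>u^2 - d*z^2\<bar> \<le> M \<and> \<bar>z\<bar> \<le> 2 * int n + 1}"
  have sub: "S \<subseteq> h ` T"
  proof
    fix p assume "p \<in> S"
    then obtain A B where p: "p = (A,B)" and A: "\<bar>A\<bar> \<le> int n" and B: "\<bar>B\<bar> \<le> int n"
      and sq: "rat_square (D * ((A + B - 1) ^ 2 - 4 * A * B))" unfolding S_def using bnd by auto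
    obtain z u where e: "(A, B) = (let v = (u^2 + 1 - d*z^2) div 2 in ((u + v) div 2, (v - u) div 2))"
      and ub: "\<bar>u\<bar> \<le> 2 * int n" and wb: "\<bar>u^2 - d*z^2\<bar> \<le> 4 * int n + 1" and zb: "\<bar>z\<bar> \<le> 2 * int n + 1"
      using part2_sub[OF A B D sq d_def] by blast
    have "p = h (z, u)" unfolding h_def p using e by simp
    moreover have "(z, u) \<in> T" unfolding T_def M_def using ub wb zb by simp
    ultimately show "p \<in> h ` T" by blast
  qed
  have finT: "finite T"
  proof (rule finite_subset)
    show "T \<subseteq> {-(2 * int n + 1)..2 * int n + 1} \<times> {-(2 * int n)..2 * int n}"
      unfolding T_def by (auto simp: abs_le_iff)
  qed simp
  define Ta where "Ta = {p \<in> T. d * (fst p)^2 \<le> 2 * M}"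
  define Tb where "Tb = {p \<in> T. d * (fst p)^2 > 2 * M}"
  have TU: "T = Ta \<union> Tb" unfolding Ta_def Tb_def by auto
  have finTa: "finite Ta" and finTb: "finite Tb" using finT unfolding Ta_def Tb_def by auto
  define X where "X = {z::int. real_of_int z ^ 2 \<le> 2 * Mr}"
  define Y where "Y = {u::int. real_of_int u ^ 2 \<le> 3 * Mr}"
  have Ta_sub: "Ta \<subseteq> X \<times> Y"
  proof clarify
    fix z u assume "(z, u) \<in> Ta"
    then have t1: "\<bar>u^2 - d*z^2\<bar> \<le> M" and t2: "d*z^2 \<le> 2*M" unfolding Ta_def T_def by auto
    have w1: "u^2 - d*z^2 \<le> M" using t1 unfolding abs_le_iff by auto
    have w2: "d*z^2 - u^2 \<le> M" using t1 unfolding abs_le_iff by auto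
    have "u^2 \<le> 3*M" using w1 t2 by linarith
    hence "real_of_int (u^2) \<le> real_of_int (3*M)" by (simp only: of_int_le_iff)
    hence "real_of_int u ^ 2 \<le> 3 * Mr" unfolding Mr_def by simp
    hence uY: "u \<in> Y" unfolding Y_def by simp
    have "z^2 \<le> 2*M"
    proof (cases "d > 0")
      case True
      hence "z^2 \<le> d * z^2" using mult_right_mono[of 1 d "z^2"] by simp
      thus ?thesis using t2 by linarith
    next
      case False
      hence "d < 0" using d0 by simp
      hence "z^2 \<le> - d * z^2" using mult_right_mono[of 1 "-d" "z^2"] by simp
      moreover have "- d * z^2 = -(d * z^2)" by simp
      ultimately show ?thesis using w1 M0 zero_le_power2[of u] by linarith
    qed
    hence "real_of_int (z^2) \<le> real_of_int (2*M)" by (simp only: of_int_le_iff)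
    hence "real_of_int z ^ 2 \<le> 2 * Mr" unfolding Mr_def by simp
    hence zX: "z \<in> X" unfolding X_def by simp
    show "z \<in> X \<and> u \<in> Y" using zX uY by simp
  qed
  have Mr5: "Mr \<ge> 5" using Mr n1 by simp
  have finX: "finite X" unfolding X_def by (rule cnt_sq(1)) (use Mr5 in simp)
  have finY: "finite Y" unfolding Y_def by (rule cnt_sq(1)) (use Mr5 in simp)
  have cX: "real (card X) \<le> 2 * sqrt (2 * Mr) + 1" unfolding X_def by (rule cnt_sq(2)) (use Mr5 in simp)
  have cY: "real (card Y) \<le> 2 * sqrt (3 * Mr) + 1" unfolding Y_def by (rule cnt_sq(2)) (use Mr5 in simp)
  have cTa: "real (card Ta) \<le> 27 * Mr"
  proof -
    define a where "a = sqrt (2 * Mr)"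
    define b where "b = sqrt (3 * Mr)"
    have a1: "a \<ge> 1" unfolding a_def using Mr5 by simp
    have b1: "b \<ge> 1" unfolding b_def using Mr5 by simp
    have "card Ta \<le> card (X \<times> Y)" using Ta_sub finX finY by (intro card_mono) auto
    hence "card Ta \<le> card X * card Y" by (simp add: card_cartesian_product)
    hence "real (card Ta) \<le> real (card X) * real (card Y)" by (metis of_nat_le_iff of_nat_mult)
    also have "\<dots> \<le> (2 * a + 1) * (2 * b + 1)" using cX cY unfolding a_def b_def
      by (intro mult_mono) auto
    also have "\<dots> \<le> (3 * a) * (3 * b)" using a1 b1 by (intro mult_mono) auto
    also have "a * b = sqrt 6 * Mr"
    proof -
      have "a * b = sqrt ((2 * Mr) * (3 * Mr))" unfolding a_def b_def by (rule real_sqrt_mult[symmetric])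
      also have "(2 * Mr) * (3 * Mr) = 6 * Mr^2" by (simp add: power2_eq_square)
      also have "sqrt (6 * Mr^2) = sqrt 6 * sqrt (Mr^2)" by (rule real_sqrt_mult)
      also have "sqrt (Mr^2) = Mr" using Mr5 by simp
      finally show ?thesis .
    qed
    hence "(3 * a) * (3 * b) = 9 * sqrt 6 * Mr" by (simp add: algebra_simps)
    also have "sqrt 6 \<le> 3"
    proof -
      have "sqrt 6 \<le> sqrt ((3::real)^2)" by (rule real_sqrt_le_mono) simp
      also have "sqrt ((3::real)^2) = 3" by (rule real_sqrt_abs[THEN trans]) simp
      finally show ?thesis .
    qed
    hence "9 * sqrt 6 * Mr \<le> 27 * Mr" using Mr5 by simp
    finally show ?thesis .
  qed
  define m where "m = 2 * n + 1"
  define R where "R = {-int m..int m} - {0}"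
  define W where "W z = {u::int. 2 * M < d * z^2 \<and> d * z^2 - M \<le> u^2 \<and> u^2 \<le> d * z^2 + M}" for z
  have Tb_sub: "Tb \<subseteq> (SIGMA z:R. W z)"
  proof clarify
    fix z u assume "(z, u) \<in> Tb"
    then have t1: "\<bar>u^2 - d*z^2\<bar> \<le> M" and t2: "d*z^2 > 2*M" and t3: "\<bar>z\<bar> \<le> 2 * int n + 1"
      unfolding Tb_def T_def by auto
    have z0: "z \<noteq> 0" using t2 M0 by auto
    have "z \<in> R" unfolding R_def m_def using t3 z0 by (auto simp: abs_le_iff)
    moreover have "u \<in> W z" unfolding W_def using t1 t2 unfolding abs_le_iff by auto
    ultimately show "z \<in> R \<and> u \<in> W z" by simp
  qed
  have finR: "finite R" unfolding R_def by simp
  have WW: "\<And>z. z \<noteq> 0 \<Longrightarrow> finite (W z) \<and> real (card (W z)) \<le> 4 * Mr / real (nat \<bar>z\<bar>) + 2"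
  proof -
    fix z :: int assume z0: "z \<noteq> 0"
    show "finite (W z) \<and> real (card (W z)) \<le> 4 * Mr / real (nat \<bar>z\<bar>) + 2"
    proof (cases "2 * M < d * z^2")
      case False
      hence "W z = {}" unfolding W_def by auto
      thus ?thesis using Mr5 by simp
    next
      case True
      define a where "a = real_of_int (d * z^2)"
      have Wz: "W z = {u::int. a - Mr \<le> real_of_int u ^ 2 \<and> real_of_int u ^ 2 \<le> a + Mr}"
        unfolding W_def
      proof (rule Collect_cong)
        fix u :: int
        have i1: "(d * z^2 - M \<le> u^2) = (a - Mr \<le> real_of_int u ^ 2)"
        proof -
          have "(d * z^2 - M \<le> u^2) = (real_of_int (d * z^2 - M) \<le> real_of_int (u^2))" by (simp only: of_int_le_iff)
          thus ?thesis unfolding a_def Mr_def by (simp only: of_int_diff of_int_power)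
        qed
        have i2: "(u^2 \<le> d * z^2 + M) = (real_of_int u ^ 2 \<le> a + Mr)"
        proof -
          have "(u^2 \<le> d * z^2 + M) = (real_of_int (u^2) \<le> real_of_int (d * z^2 + M))" by (simp only: of_int_le_iff)
          thus ?thesis unfolding a_def Mr_def by (simp only: of_int_add of_int_power)
        qed
        show "(2 * M < d * z^2 \<and> d * z^2 - M \<le> u^2 \<and> u^2 \<le> d * z^2 + M) =
              (a - Mr \<le> real_of_int u ^ 2 \<and> real_of_int u ^ 2 \<le> a + Mr)" using True i1 i2 by simp
      qed
      have "real_of_int (2 * M) < real_of_int (d * z^2)" using True by (simp only: of_int_less_iff)
      hence a2: "a > 2 * Mr" unfolding a_def Mr_def by simp
      have Mp: "Mr > 0" using Mr5 by simp
      have "d > 0" using True M0 by (smt (verit) mult_nonpos_nonneg zero_le_power2)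
      hence "z^2 \<le> d * z^2" using mult_right_mono[of 1 d "z^2"] by simp
      hence "real_of_int (z^2) \<le> real_of_int (d * z^2)" by (simp only: of_int_le_iff)
      hence "real_of_int z ^ 2 \<le> a" unfolding a_def by simp
      hence "sqrt (real_of_int z ^ 2) \<le> sqrt a" by (rule real_sqrt_le_mono)
      hence za: "\<bar>real_of_int z\<bar> \<le> sqrt a" by simp
      have zp: "\<bar>real_of_int z\<bar> > 0" using z0 by simp
      have sap: "sqrt a > 0" using za zp by linarith
      have "4 * Mr / sqrt a \<le> 4 * Mr / \<bar>real_of_int z\<bar>" using za zp Mp sap
        by (intro divide_left_mono) auto
      moreover have "real (nat \<bar>z\<bar>) = \<bar>real_of_int z\<bar>" by simp
      ultimately show ?thesis unfolding Wz using cnt_ann[OF Mp a2] by simp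
    qed
  qed
  have "card Tb \<le> card (SIGMA z:R. W z)"
    using Tb_sub finR WW unfolding R_def by (intro card_mono) auto
  also have "\<dots> = (\<Sum>z\<in>R. card (W z))" using finR WW unfolding R_def by (intro card_SigmaI) auto
  finally have "real (card Tb) \<le> (\<Sum>z\<in>R. real (card (W z)))" by (metis of_nat_le_iff of_nat_sum)
  also have "\<dots> \<le> (\<Sum>z\<in>R. (\<lambda>k. 4 * Mr / real k + 2) (nat \<bar>z\<bar>))"
    using WW unfolding R_def by (intro sum_mono) auto
  also have "\<dots> = 2 * (4 * Mr * harm m + 2 * real m)"
    unfolding R_def using sum_sym[of "\<lambda>k. 4 * Mr / real k + 2" m] sum_harm2[of "4 * Mr" m] by simp
  finally have cTb: "real (card Tb) \<le> 8 * Mr * harm m + 4 * real m" by simp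
  have hm: "harm m \<le> 3 + ln (real n)"
  proof -
    have "harm m \<le> 1 + ln (real m)" using harm_le_ln[of m] unfolding m_def by simp
    also have "ln (real m) \<le> ln (3 * real n)" unfolding m_def using n1 by simp
    also have "ln (3 * real n) = ln 3 + ln (real n)" using n1 by (simp add: ln_mult)
    also have "ln (3::real) \<le> 2" using ln_le_minus_one[of 3] by simp
    finally show ?thesis by simp
  qed
  have "card S \<le> card (h ` T)" using sub finT by (intro card_mono) auto
  also have "\<dots> \<le> card T" using finT by (rule card_image_le)
  also have "\<dots> \<le> card Ta + card Tb" unfolding TU by (rule card_Un_le)
  finally have cS: "real (card S) \<le> real (card Ta) + real (card Tb)" by (metis of_nat_add of_nat_le_iff)
  have lnn: "ln (real n) \<ge> 0" using n1 by simp
  have "8 * Mr * harm m \<le> 8 * (5 * real n) * (3 + ln (real n))"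
    using hm Mr n1 lnn harm_nonneg[of m] by (intro mult_mono) auto
  hence "real (card S) \<le> 27 * (5 * real n) + 8 * (5 * real n) * (3 + ln (real n)) + 4 * (3 * real n)"
    using cS cTa cTb Mr n1 unfolding m_def by simp
  also have "\<dots> \<le> 300 * real n * (1 + ln (real n))" using n1 lnn by (simp add: algebra_simps)
  also have "\<dots> \<le> 300 * N * (1 + ln N)" using nN n1 lnn by (intro mult_mono) auto
  finally show ?thesis unfolding count2_def S_def .
qed

lemma key_bound:
  fixes \<epsilon> N :: real assumes e: "\<epsilon> > 0" and N: "N \<ge> 1"
  shows "N * (1 + ln N) \<le> (1 + 1 / \<epsilon>) * N powr (1 + \<epsilon>)"
proof -
  have l: "ln N \<le> N powr \<epsilon> / \<epsilon>" by (rule ln_powr_bound[OF N e])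
  have p: "N powr (1 + \<epsilon>) = N * N powr \<epsilon>" using N by (simp add: powr_add)
  have "N powr 1 \<le> N powr (1 + \<epsilon>)" using N e by (intro powr_mono) auto
  hence n1: "N \<le> N powr (1 + \<epsilon>)" using N by simp
  have "N * ln N \<le> N * (N powr \<epsilon> / \<epsilon>)" using l N by (intro mult_left_mono) auto
  also have "\<dots> = N powr (1 + \<epsilon>) / \<epsilon>" using p by simp
  finally have "N * ln N \<le> N powr (1 + \<epsilon>) / \<epsilon>" .
  hence "N * (1 + ln N) \<le> N powr (1 + \<epsilon>) + N powr (1 + \<epsilon>) / \<epsilon>" using n1 by (simp add: algebra_simps)
  also have "\<dots> = (1 + 1 / \<epsilon>) * N powr (1 + \<epsilon>)" by (simp add: algebra_simps)
  finally show ?thesis .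
qed

theorem lemma4p2:
  shows "\<forall>\<epsilon>::real. \<epsilon> > 0 \<longrightarrow>
     (\<exists>C::real. \<forall>N::real. N \<ge> 1 \<longrightarrow> real (count1 N) \<le> C * N powr (1 + \<epsilon>))
   \<and> (\<exists>C::real. \<forall>D::int. \<forall>N::real. (\<nexists>k::int. D = k ^ 2) \<and> N \<ge> 1 \<longrightarrow>
         real (count2 D N) \<le> C * \<bar>real_of_int D\<bar> powr \<epsilon> * N powr (1 + \<epsilon>))"
proof (intro allI impI conjI)
  fix \<epsilon> :: real assume e: "\<epsilon> > 0"
  show "\<exists>C::real. \<forall>N::real. N \<ge> 1 \<longrightarrow> real (count1 N) \<le> C * N powr (1 + \<epsilon>)"
  proof (intro exI allI impI)
    fix N :: real assume N: "N \<ge> 1"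
    have "real (count1 N) \<le> 21 * (N * (1 + ln N))" using part1[OF N] by simp
    also have "\<dots> \<le> 21 * ((1 + 1 / \<epsilon>) * N powr (1 + \<epsilon>))" using key_bound[OF e N] by simp
    finally show "real (count1 N) \<le> (21 * (1 + 1 / \<epsilon>)) * N powr (1 + \<epsilon>)" by (simp only: mult.assoc)
  qed
  show "\<exists>C::real. \<forall>D::int. \<forall>N::real. (\<nexists>k::int. D = k ^ 2) \<and> N \<ge> 1 \<longrightarrow>
         real (count2 D N) \<le> C * \<bar>real_of_int D\<bar> powr \<epsilon> * N powr (1 + \<epsilon>)"
  proof (intro exI allI impI)
    fix D :: int and N :: real assume a: "(\<nexists>k::int. D = k ^ 2) \<and> N \<ge> 1"
    hence N: "N \<ge> 1" and D: "D \<noteq> 0" by (auto intro: exI[of _ 0])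
    have D1: "\<bar>real_of_int D\<bar> powr \<epsilon> \<ge> 1" using D e by (intro ge_one_powr_ge_zero) auto
    have "real (count2 D N) \<le> 300 * (N * (1 + ln N))" using part2[OF N D] by simp
    also have "\<dots> \<le> 300 * ((1 + 1 / \<epsilon>) * N powr (1 + \<epsilon>))" using key_bound[OF e N] by simp
    also have "\<dots> \<le> 300 * ((1 + 1 / \<epsilon>) * N powr (1 + \<epsilon>)) * \<bar>real_of_int D\<bar> powr \<epsilon>"
    proof -
      have pos: "0 \<le> 300 * ((1 + 1 / \<epsilon>) * N powr (1 + \<epsilon>))" using e by simp
      show ?thesis using mult_left_mono[OF D1 pos] by simp
    qed
    finally show "real (count2 D N) \<le> (300 * (1 + 1 / \<epsilon>)) * \<bar>real_of_int D\<bar> powr \<epsilon> * N powr (1 + \<epsilon>)"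
      by (simp add: algebra_simps)
  qed
qed

end
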